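(* Let $A$ be a ring, $W$ a multiplicative subset of $A$, $M$ a left $A$-module, $S \subseteq M$, and $T \subseteq A$. Then $[T]^W_A S \subseteq [TS]^W_M$. Moreover, if $T$ is contained in the center $Z(A)$ of $A$, then $[T]^W_A [S]^W_M \subseteq [TS]^W_M$.
   Context: Rings are unital, not necessarily commutative. For $T\subseteq A$ and a left $A$-module $N$, a $T$-factroid of $N$ is an additive subgroup $F$ of $N$ such that for all $x\in N$ and $t\in T$, $tx\in F$ implies $x\in F$; for $S\subseteq N$, $[S]^T_N$ is the smallest $T$-factroid of $N$ containing $S$ ($A$ itself is viewed as a left $A$-module). For subsets $X\subseteq A$, $Y\subseteq M$, $XY=\{xy\mid x\in X, y\in Y\}$. *)

theory Defs
  imports Main
begin

definition left_module :: "('a::ring_1 \<Rightarrow> 'm::ab_group_add \<Rightarrow> 'm) \<Rightarrow> bool" where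
  "left_module act \<longleftrightarrow>
     (\<forall>a x y. act a (x + y) = act a x + act a y) \<and>
     (\<forall>a b x. act (a + b) x = act a x + act b x) \<and>
     (\<forall>a b x. act (a * b) x = act a (act b x)) \<and>
     (\<forall>x. act 1 x = x)"

definition multiplicative_subset :: "'a::ring_1 set \<Rightarrow> bool" where
  "multiplicative_subset W \<longleftrightarrow> 1 \<in> W \<and> (\<forall>a\<in>W. \<forall>b\<in>W. a * b \<in> W)"

definition additive_subgroup :: "'m::ab_group_add set \<Rightarrow> bool" where
  "additive_subgroup F \<longleftrightarrow> 0 \<in> F \<and> (\<forall>x\<in>F. \<forall>y\<in>F. x + y \<in> F) \<and> (\<forall>x\<in>F. - x \<in> F)"

definition factroid :: "('a \<Rightarrow> 'm \<Rightarrow> 'm) \<Rightarrow> 'a set \<Rightarrow> 'm::ab_group_add set \<Rightarrow> bool" where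
  "factroid act T F \<longleftrightarrow> additive_subgroup F \<and> (\<forall>x. \<forall>t\<in>T. act t x \<in> F \<longrightarrow> x \<in> F)"

text \<open>[S]^T_N: the smallest T-factroid containing S.\<close>
definition factroid_hull :: "('a \<Rightarrow> 'm \<Rightarrow> 'm) \<Rightarrow> 'a set \<Rightarrow> 'm::ab_group_add set \<Rightarrow> 'm set" where
  "factroid_hull act T S = \<Inter> {F. factroid act T F \<and> S \<subseteq> F}"

definition set_act :: "('a \<Rightarrow> 'm \<Rightarrow> 'm) \<Rightarrow> 'a set \<Rightarrow> 'm set \<Rightarrow> 'm set" where
  "set_act act X Y = {act x y | x y. x \<in> X \<and> y \<in> Y}"

definition ring_center :: "'a::ring_1 set" where
  "ring_center = {z. \<forall>a. z * a = a * z}"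

end

theory Submission
  imports Defs
begin

lemma hull_sub: "S \<subseteq> factroid_hull act T S"
  unfolding factroid_hull_def by blast

lemma hull_min: "factroid act T G \<Longrightarrow> S \<subseteq> G \<Longrightarrow> factroid_hull act T S \<subseteq> G"
  unfolding factroid_hull_def by blast

lemma hull_factroid: "factroid act T (factroid_hull act T S)"
  unfolding factroid_def additive_subgroup_def factroid_hull_def by blast

lemma lm_facts:
  assumes "left_module act"
  shows "act 0 y = 0" "act (-a) y = - act a y" "act a 0 = 0" "act a (-x) = - act a x"
    "act (a+b) y = act a y + act b y" "act a (x + z) = act a x + act a z"
    "act (a*b) y = act a (act b y)"
proof -
  have add1: "\<And>a b y. act (a+b) y = act a y + act b y" and add2: "\<And>a x z. act a (x+z) = act a x + act a z"
    using assms unfolding left_module_def by auto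
  show "act (a+b) y = act a y + act b y" "act a (x + z) = act a x + act a z" by (rule add1, rule add2)
  show "act (a*b) y = act a (act b y)" using assms unfolding left_module_def by auto
  have "act 0 y = act 0 y + act 0 y" using add1[of 0 0 y] by simp
  thus z1: "act 0 y = 0" by simp
  have "act a 0 = act a 0 + act a 0" using add2[of a 0 0] by simp
  thus z2: "act a 0 = 0" by simp
  have "act (-a + a) y = 0" using add1[of 0 0 y] using z1 by simp
  thus "act (-a) y = - act a y" using add1[of "-a" a y] by (simp add: eq_neg_iff_add_eq_0)
  have "act a (-x + x) = 0" using z2 by simp
  thus "act a (-x) = - act a x" using add2[of a "-x" x] by (simp add: eq_neg_iff_add_eq_0)
qed

lemma ring_factroid:
  assumes "left_module act" "factroid act W F"
  shows "factroid (*) W {a. act a y \<in> F}"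
  using assms(2) lm_facts[OF assms(1)]
  unfolding factroid_def additive_subgroup_def by auto

lemma mod_factroid:
  assumes "left_module act" "factroid act W F" "\<forall>w\<in>W. t * w = w * t"
  shows "factroid act W {x. act t x \<in> F}"
proof -
  note L = lm_facts[OF assms(1)]
  have sg: "additive_subgroup F" and fw: "\<And>x w. w \<in> W \<Longrightarrow> act w x \<in> F \<Longrightarrow> x \<in> F"
    using assms(2) unfolding factroid_def by auto
  have "additive_subgroup {x. act t x \<in> F}"
    using sg L unfolding additive_subgroup_def by auto
  moreover have "x \<in> {x. act t x \<in> F}" if w: "w \<in> W" and h: "act w x \<in> {x. act t x \<in> F}" for x w
  proof -
    have "act t (act w x) = act w (act t x)"
      using L(7)[of t w x] L(7)[of w t x] assms(3) w by simp
    thus ?thesis using h fw[OF w] by simp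
  qed
  ultimately show ?thesis unfolding factroid_def by blast
qed

theorem proposition5p7:
  fixes act :: "'a::ring_1 \<Rightarrow> 'm::ab_group_add \<Rightarrow> 'm"
    and W T :: "'a set" and S :: "'m set"
  assumes "left_module act"
    and "multiplicative_subset W"
  shows "set_act act (factroid_hull (*) W T) S \<subseteq> factroid_hull act W (set_act act T S)
     \<and> (T \<subseteq> ring_center \<longrightarrow>
         set_act act (factroid_hull (*) W T) (factroid_hull act W S)
           \<subseteq> factroid_hull act W (set_act act T S))"
proof -
  define F where "F = factroid_hull act W (set_act act T S)"
  have FF: "factroid act W F" unfolding F_def by (rule hull_factroid)
  have TS: "set_act act T S \<subseteq> F" unfolding F_def by (rule hull_sub)
  have key: "factroid_hull (*) W T \<subseteq> {a. act a y \<in> F}" if "\<forall>t\<in>T. act t y \<in> F" for y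
    using hull_min[OF ring_factroid[OF assms(1) FF], of T y] that by blast
  have P1: "set_act act (factroid_hull (*) W T) S \<subseteq> F"
  proof
    fix z assume "z \<in> set_act act (factroid_hull (*) W T) S"
    then obtain a s where z: "z = act a s" "a \<in> factroid_hull (*) W T" "s \<in> S"
      unfolding set_act_def by blast
    have "\<forall>t\<in>T. act t s \<in> F" using TS z(3) unfolding set_act_def by blast
    thus "z \<in> F" using key z by blast
  qed
  have P2: "set_act act (factroid_hull (*) W T) (factroid_hull act W S) \<subseteq> F"
    if TC: "T \<subseteq> ring_center"
  proof
    fix z assume "z \<in> set_act act (factroid_hull (*) W T) (factroid_hull act W S)"
    then obtain a s where z: "z = act a s" "a \<in> factroid_hull (*) W T" "s \<in> factroid_hull act W S"
      unfolding set_act_def by blast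
    have "\<forall>t\<in>T. act t s \<in> F"
    proof
      fix t assume t: "t \<in> T"
      have c: "\<forall>w\<in>W. t * w = w * t" using TC t unfolding ring_center_def by blast
      have "S \<subseteq> {x. act t x \<in> F}" using TS t unfolding set_act_def by blast
      from hull_min[OF mod_factroid[OF assms(1) FF c] this] z(3)
      show "act t s \<in> F" by blast
    qed
    thus "z \<in> F" using key z by blast
  qed
  show ?thesis using P1 P2 unfolding F_def by blast
qed

end
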